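(* Let $A=(\{0,1\},f_c,f_d)$ be the self-similar cellular automaton with $f_c(x,y,z)=f_d(x,y,z)=z$ for all $x,y,z\in\{0,1\}$ (the left shift). Then for every initial configuration $c:\mathbb{Z}\to\{0,1\}$ and every $b\in\{0,1\}$ there exists an evolution $s$ of $A$ from $c$ with $s(0,1)=b$. In particular the state of cell $0$ during the time interval $[1,2)$ is not deterministic, for any initial configuration.
   Context: A self-similar cellular automaton is a triple $A=(S,f_c,f_d)$ with $S$ a finite set of states and $f_c,f_d:S^3\to S$. Cells are indexed by $j\in\mathbb{Z}$; cell $j$ has cycles $[k/2^j,(k+1)/2^j)$, and the $k$-th cycle of cell $j$ is identified with the pair $(j,k)$. The automaton is started at time $0$; the set of cycles is $C=\{(i,k): i\in\mathbb{Z},\ k\in\mathbb{Z}_{\ge 0}\}$. Given an initial configuration $c:\mathbb{Z}\to S$, an evolution of $A$ from $c$ is a map $s:C\to S$ with $s(i,0)=c(i)$ for all $i$ and, for all $(i,k)$ with $k\ge1$, $s(i,k)=f_c\big(s(i-1,\lfloor (k-1)/2\rfloor),s(i,k-1),s(i+1,2k-1)\big)$ if $k$ is even and $s(i,k)=f_d(\text{same arguments})$ if $k$ is odd. The cycle $(0,1)$ is the state of cell $0$ during $[1,2)$. *)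

theory Defs
  imports Main
begin

text \<open>Cycles are pairs (i,k) with i an integer cell index and k a natural cycle number.
  s is an evolution from the initial configuration c.\<close>

definition is_evolution ::
  "('a \<Rightarrow> 'a \<Rightarrow> 'a \<Rightarrow> 'a) \<Rightarrow> ('a \<Rightarrow> 'a \<Rightarrow> 'a \<Rightarrow> 'a) \<Rightarrow> (int \<Rightarrow> 'a) \<Rightarrow> (int \<Rightarrow> nat \<Rightarrow> 'a) \<Rightarrow> bool"
where
  "is_evolution fc fd c s \<longleftrightarrow>
     (\<forall>i. s i 0 = c i) \<and>
     (\<forall>i k. k \<ge> 1 \<longrightarrow>
        s i k = (if even k then fc else fd)
                  (s (i - 1) ((k - 1) div 2)) (s i (k - 1)) (s (i + 1) (2 * k - 1)))"

definition shift_rule :: "bool \<Rightarrow> bool \<Rightarrow> bool \<Rightarrow> bool" where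
  "shift_rule x y z = z"

end

theory Submission
  imports Defs
begin

theorem mainTheorem2:
  fixes c :: "int \<Rightarrow> bool" and b :: bool
  shows "\<exists>s. is_evolution shift_rule shift_rule c s \<and> s 0 1 = b"
proof (rule exI[of _ "\<lambda>i k. if k = (0::nat) then c i else b"])
  show "is_evolution shift_rule shift_rule c (\<lambda>i k. if k = (0::nat) then c i else b) \<and>
    (\<lambda>i k. if k = (0::nat) then c i else b) 0 1 = b"
    unfolding is_evolution_def shift_rule_def by simp
qed

end
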